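(* Let $\theta_0\in\mathbb{R}^d$, source task vectors $\tau_1,\dots,\tau_T\in\mathbb{R}^d$ and a target task vector $\tau_{\mathrm{tar}}\in\mathbb{R}^d$ with $\|\tau_i\|^2\le C$ for all $i$ and $\|\tau_{\mathrm{tar}}\|^2\le C$, where $C>0$. Let $\theta_{\mathrm{tar}}=\theta_0+\tau_{\mathrm{tar}}$ and let $\mathcal{L}_{\mathrm{tar}}:\mathbb{R}^d\to\mathbb{R}$ be differentiable with $\nabla\mathcal{L}_{\mathrm{tar}}(\theta_{\mathrm{tar}})=0$, and suppose there is $L_{\mathrm{tar}}\ge 0$ such that for all $\theta$ with $\|\theta-\theta_{\mathrm{tar}}\|\le 2\sqrt{C}$, $\mathcal{L}_{\mathrm{tar}}(\theta)-\mathcal{L}_{\mathrm{tar}}(\theta_{\mathrm{tar}})\le\langle\theta-\theta_{\mathrm{tar}},\nabla\mathcal{L}_{\mathrm{tar}}(\theta_{\mathrm{tar}})\rangle+\frac{L_{\mathrm{tar}}}{2}\|\theta-\theta_{\mathrm{tar}}\|^2$. Assume $\langle\tau_{\mathrm{tar}},\tau_i\rangle\ge 0$ for all $i\in[T]$; let $i^\star\in\arg\max_{i\in[T]}\langle\tau_{\mathrm{tar}},\tau_i\rangle$ and suppose $\langle\tau_{\mathrm{tar}},\tau_{i^\star}\rangle\ge\gamma C$ for some $0<\gamma\le 1$. Let $\mathbf{W}_e\in\mathbb{R}^{T\times M}$ have every column in $\Delta^{T-1}$, let $B_m=\sum_{j=1}^T\mathbf{W}_e[j,m]\tau_j$, and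 suppose there is $m^\star\in[M]$ with $\mathbf{W}_e[i^\star,m^\star]\ge\rho$ for some $\rho\in(0,1]$. Then there exists $\alpha\in\Delta^{M-1}$ such that $\theta^M_{\mathrm{Add}}=\theta_0+\sum_{m=1}^M\alpha_mB_m$ satisfies $$\mathcal{L}_{\mathrm{tar}}(\theta^M_{\mathrm{Add}})\le\mathcal{L}_{\mathrm{tar}}(\theta_{\mathrm{tar}})+L_{\mathrm{tar}}C(1-\rho\gamma).$$
   Context: Norms and inner products are Euclidean. $\Delta^{K-1}=\{x\in\mathbb{R}^K: x\ge 0,\ \sum_k x_k=1\}$. The vectors $B_m$ are the basis vectors (convex combinations of task vectors) produced by a softmax-activated encoder with weight matrix $\mathbf{W}_e$. *)

theory Defs
  imports "HOL-Analysis.Analysis"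
begin

text \<open>Probability simplex Delta^{K-1}, with coordinates indexed by 0..K-1.\<close>
definition prob_simplex :: "nat \<Rightarrow> (nat \<Rightarrow> real) set" where
  "prob_simplex K = {x. (\<forall>k<K. 0 \<le> x k) \<and> (\<Sum>k<K. x k) = 1}"

end

theory Submission
  imports Defs
begin

theorem mainTheorem6:
  fixes \<theta>0 \<tau>tar :: "'a::euclidean_space"
    and \<tau> :: "nat \<Rightarrow> 'a"
    and T M :: nat
    and C Ltar \<gamma> \<rho> :: real
    and \<L> :: "'a \<Rightarrow> real"
    and grad :: "'a \<Rightarrow> 'a"
    and W :: "nat \<Rightarrow> nat \<Rightarrow> real"
    and istar mstar :: nat
  assumes Cpos: "C > 0"
    and tau_bd: "\<forall>i<T. (norm (\<tau> i))\<^sup>2 \<le> C"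
    and tar_bd: "(norm \<tau>tar)\<^sup>2 \<le> C"
    and grad: "\<forall>\<theta>. (\<L> has_derivative (\<lambda>h. grad \<theta> \<bullet> h)) (at \<theta>)"
    and grad0: "grad (\<theta>0 + \<tau>tar) = 0"
    and Ltar: "Ltar \<ge> 0"
    and smooth: "\<forall>\<theta>. norm (\<theta> - (\<theta>0 + \<tau>tar)) \<le> 2 * sqrt C \<longrightarrow>
        \<L> \<theta> - \<L> (\<theta>0 + \<tau>tar) \<le> (\<theta> - (\<theta>0 + \<tau>tar)) \<bullet> grad (\<theta>0 + \<tau>tar)
          + Ltar / 2 * (norm (\<theta> - (\<theta>0 + \<tau>tar)))\<^sup>2"
    and nonneg: "\<forall>i<T. \<tau>tar \<bullet> \<tau> i \<ge> 0"
    and istar: "istar < T" "\<forall>i<T. \<tau>tar \<bullet> \<tau> i \<le> \<tau>tar \<bullet> \<tau> istar"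
    and gamma: "0 < \<gamma>" "\<gamma> \<le> 1" "\<tau>tar \<bullet> \<tau> istar \<ge> \<gamma> * C"
    and W: "\<forall>m<M. (\<lambda>j. W j m) \<in> prob_simplex T"
    and mstar: "mstar < M" "W istar mstar \<ge> \<rho>"
    and rho: "0 < \<rho>" "\<rho> \<le> 1"
  shows "\<exists>\<alpha> \<in> prob_simplex M.
     \<L> (\<theta>0 + (\<Sum>m<M. \<alpha> m *\<^sub>R (\<Sum>j<T. W j m *\<^sub>R \<tau> j)))
       \<le> \<L> (\<theta>0 + \<tau>tar) + Ltar * C * (1 - \<rho> * \<gamma>)"
proof -
  define \<alpha> :: "nat \<Rightarrow> real" where "\<alpha> = (\<lambda>m. if m = mstar then 1 else 0)"
  have \<alpha>S: "\<alpha> \<in> prob_simplex M"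
    using mstar(1) by (auto simp: prob_simplex_def \<alpha>_def)
  define B where "B = (\<Sum>j<T. W j mstar *\<^sub>R \<tau> j)"
  have sumB: "(\<Sum>m<M. \<alpha> m *\<^sub>R (\<Sum>j<T. W j m *\<^sub>R \<tau> j)) = B"
    proof -
    have "(\<Sum>m<M. \<alpha> m *\<^sub>R (\<Sum>j<T. W j m *\<^sub>R \<tau> j)) = (\<Sum>m<M. if m = mstar then (\<Sum>j<T. W j m *\<^sub>R \<tau> j) else 0)"
      by (intro sum.cong) (auto simp: \<alpha>_def)
    also have "\<dots> = B" using mstar(1) by (simp add: B_def)
    finally show ?thesis .
  qed
  have Wm: "\<forall>j<T. 0 \<le> W j mstar" "(\<Sum>j<T. W j mstar) = 1"
    using W mstar(1) by (auto simp: prob_simplex_def)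
  have sC: "\<forall>i<T. norm (\<tau> i) \<le> sqrt C"
    using tau_bd by (metis real_le_rsqrt)
  have "norm B \<le> (\<Sum>j<T. norm (W j mstar *\<^sub>R \<tau> j))"
    unfolding B_def by (rule norm_sum)
  also have "\<dots> = (\<Sum>j<T. W j mstar * norm (\<tau> j))"
    using Wm by (intro sum.cong) auto
  also have "\<dots> \<le> (\<Sum>j<T. W j mstar * sqrt C)"
    using Wm sC by (intro sum_mono mult_left_mono) auto
  also have "\<dots> = sqrt C" using Wm by (simp add: sum_distrib_right[symmetric])
  finally have nB: "norm B \<le> sqrt C" .
  have nB2: "(norm B)\<^sup>2 \<le> C"
    using nB Cpos by (metis norm_ge_zero power_mono real_sqrt_pow2 less_imp_le)
  have ntar: "norm \<tau>tar \<le> sqrt C" using tar_bd by (metis real_le_rsqrt)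
  have ip: "\<tau>tar \<bullet> B = (\<Sum>j<T. W j mstar * (\<tau>tar \<bullet> \<tau> j))"
    unfolding B_def by (simp add: inner_sum_right)
  have "(\<Sum>j<T. W j mstar * (\<tau>tar \<bullet> \<tau> j)) \<ge> W istar mstar * (\<tau>tar \<bullet> \<tau> istar)"
  proof -
    have "(\<Sum>j<T. W j mstar * (\<tau>tar \<bullet> \<tau> j)) =
        W istar mstar * (\<tau>tar \<bullet> \<tau> istar) + (\<Sum>j\<in>{..<T}-{istar}. W j mstar * (\<tau>tar \<bullet> \<tau> j))"
      using istar(1) by (simp add: sum.remove)
    moreover have "(\<Sum>j\<in>{..<T}-{istar}. W j mstar * (\<tau>tar \<bullet> \<tau> j)) \<ge> 0"
      using Wm nonneg by (intro sum_nonneg) auto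
    ultimately show ?thesis by linarith
  qed
  moreover have "W istar mstar * (\<tau>tar \<bullet> \<tau> istar) \<ge> \<rho> * (\<gamma> * C)"
    using mstar(2) gamma rho Cpos by (intro mult_mono) auto
  ultimately have ipB: "\<tau>tar \<bullet> B \<ge> \<rho> * \<gamma> * C" using ip by simp
  have d: "\<theta>0 + B - (\<theta>0 + \<tau>tar) = B - \<tau>tar" by simp
  have nd: "norm (B - \<tau>tar) \<le> 2 * sqrt C"
    using norm_triangle_ineq4[of B \<tau>tar] nB ntar by linarith
  have sq: "(norm (B - \<tau>tar))\<^sup>2 = (norm B)\<^sup>2 - 2 * (\<tau>tar \<bullet> B) + (norm \<tau>tar)\<^sup>2"
    by (simp add: power2_norm_eq_inner inner_diff_left inner_diff_right inner_commute)
  have sq2: "(norm (B - \<tau>tar))\<^sup>2 \<le> 2 * C * (1 - \<rho> * \<gamma>)"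
    using sq nB2 tar_bd ipB by (simp add: algebra_simps)
  have "\<L> (\<theta>0 + B) - \<L> (\<theta>0 + \<tau>tar) \<le> Ltar / 2 * (norm (B - \<tau>tar))\<^sup>2"
    using smooth[rule_format, of "\<theta>0 + B"] d nd grad0 by simp
  also have "\<dots> \<le> Ltar / 2 * (2 * C * (1 - \<rho> * \<gamma>))"
    using sq2 Ltar by (intro mult_left_mono) auto
  finally have "\<L> (\<theta>0 + B) \<le> \<L> (\<theta>0 + \<tau>tar) + Ltar * C * (1 - \<rho> * \<gamma>)" by simp
  thus ?thesis using \<alpha>S sumB by auto
qed

end
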